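(* Let $H$ be a locally compact abelian group, $X$ a compact metric space, $\sigma=(\sigma_1,\dots,\sigma_k)$ a $k$-tuple of pairwise commuting surjective local homeomorphisms of $X$, and $\varphi=(\varphi_1,\dots,\varphi_k)$ a $k$-tuple in $C(X,H)$. The following are equivalent: (1) $\varphi_i+\varphi_j\circ\sigma_i=\varphi_j+\varphi_i\circ\sigma_j$ for all $i,j\in\{1,\dots,k\}$; (2) there exists a unique continuous $H$-valued $1$-cocycle $c$ on $\mathcal{G}(X,\sigma)$ with $c(x,\mathbf{e}_i,\sigma_i(x))=\varphi_i(x)$ for all $i\in\{1,\dots,k\}$ and $x\in X$. Moreover, every continuous $H$-valued $1$-cocycle on $\mathcal{G}(X,\sigma)$ arises in this way from some $k$-tuple $\varphi$ satisfying (1), and a continuous $1$-cocycle $c$ on $\mathcal{G}(X,\sigma)$ is a coboundary if and only if there exists $\psi\in C(X,H)$ with $c(x,\mathbf{e}_i,\sigma_i(x))=\psi(x)-\psi(\sigma_i(x))$ for all $i\in\{1,\dots,k\}$ and $x\in X$.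
   Context: For $n=(n_1,\dots,n_k)\in\mathbb{N}^k$ write $\sigma^n=\sigma_1^{n_1}\circ\cdots\circ\sigma_k^{n_k}$, and $\mathbf{e}_i$ for the canonical generators of $\mathbb{N}^k$. The groupoid $\mathcal{G}(X,\sigma)=\{(x,p-q,y)\in X\times\mathbb{Z}^k\times X : p,q\in\mathbb{N}^k,\ \sigma^p(x)=\sigma^q(y)\}$ has unit space $X$ (via $x\mapsto(x,0,x)$), $r(x,n,y)=x$, $s(x,n,y)=y$, $(x,m,y)^{-1}=(y,-m,x)$, $(x,m,y)(y,n,z)=(x,m+n,z)$, and topology with basis $U\times\{p-q\}\times V$ for $U,V\subseteq X$ open with $\sigma^p(U)=\sigma^q(V)$; it is an étale locally compact Hausdorff groupoid. A continuous $H$-valued $1$-cocycle on a topological groupoid $\mathcal{G}$ is a continuous map $c:\mathcal{G}\to H$ with $c(\gamma\gamma')=c(\gamma)+c(\gamma')$ for composable pairs; it is a coboundary if $c(\gamma)=f(r(\gamma))-f(s(\gamma))$ for some continuous $f$ on the unit space. *)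

theory Defs
  imports "HOL-Analysis.Analysis"
begin

definition local_homeo_on :: "'a::topological_space set \<Rightarrow> ('a \<Rightarrow> 'a) \<Rightarrow> bool" where
  "local_homeo_on X f \<longleftrightarrow> (\<forall>x\<in>X. \<exists>U g. x \<in> U \<and> openin (top_of_set X) U \<and>
      openin (top_of_set X) (f ` U) \<and> homeomorphism U (f ` U) f g)"

text \<open>Multi-indices in \<open>\<nat>^k\<close> are functions \<open>nat \<Rightarrow> nat\<close> vanishing at indices \<open>\<ge> k\<close>;
  elements of \<open>\<int>^k\<close> likewise as functions \<open>nat \<Rightarrow> int\<close>. Indices are \<open>0..k-1\<close>.\<close>
definition idx :: "nat \<Rightarrow> (nat \<Rightarrow> 'b::zero) \<Rightarrow> bool" where
  "idx k p \<longleftrightarrow> (\<forall>i\<ge>k. p i = 0)"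

fun spow :: "(nat \<Rightarrow> 'a \<Rightarrow> 'a) \<Rightarrow> nat \<Rightarrow> (nat \<Rightarrow> nat) \<Rightarrow> 'a \<Rightarrow> 'a" where
  "spow \<sigma> 0 p = id"
| "spow \<sigma> (Suc k) p = spow \<sigma> k p \<circ> (\<sigma> k ^^ p k)"

definition vdiff :: "(nat \<Rightarrow> nat) \<Rightarrow> (nat \<Rightarrow> nat) \<Rightarrow> (nat \<Rightarrow> int)" where
  "vdiff p q = (\<lambda>i. int (p i) - int (q i))"

definition unitvec :: "nat \<Rightarrow> nat \<Rightarrow> int" where
  "unitvec i = (\<lambda>j. if j = i then 1 else 0)"

definition grpd :: "'a set \<Rightarrow> (nat \<Rightarrow> 'a \<Rightarrow> 'a) \<Rightarrow> nat \<Rightarrow> ('a \<times> (nat \<Rightarrow> int) \<times> 'a) set" where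
  "grpd X \<sigma> k = {(x, m, y). x \<in> X \<and> y \<in> X \<and>
     (\<exists>p q. idx k p \<and> idx k q \<and> m = vdiff p q \<and> spow \<sigma> k p x = spow \<sigma> k q y)}"

definition Zset :: "(nat \<Rightarrow> 'a \<Rightarrow> 'a) \<Rightarrow> nat \<Rightarrow> 'a set \<Rightarrow> (nat \<Rightarrow> nat) \<Rightarrow> (nat \<Rightarrow> nat) \<Rightarrow> 'a set
     \<Rightarrow> ('a \<times> (nat \<Rightarrow> int) \<times> 'a) set" where
  "Zset \<sigma> k U p q V = {(x, vdiff p q, y) | x y. x \<in> U \<and> y \<in> V \<and> spow \<sigma> k p x = spow \<sigma> k q y}"

definition grpd_basis :: "'a::topological_space set \<Rightarrow> (nat \<Rightarrow> 'a \<Rightarrow> 'a) \<Rightarrow> nat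
     \<Rightarrow> ('a \<times> (nat \<Rightarrow> int) \<times> 'a) set set" where
  "grpd_basis X \<sigma> k = {Zset \<sigma> k U p q V | U p q V.
     openin (top_of_set X) U \<and> openin (top_of_set X) V \<and> idx k p \<and> idx k q \<and>
     spow \<sigma> k p ` U = spow \<sigma> k q ` V}"

definition grpd_top :: "'a::topological_space set \<Rightarrow> (nat \<Rightarrow> 'a \<Rightarrow> 'a) \<Rightarrow> nat
     \<Rightarrow> ('a \<times> (nat \<Rightarrow> int) \<times> 'a) topology" where
  "grpd_top X \<sigma> k = subtopology (topology_generated_by (grpd_basis X \<sigma> k)) (grpd X \<sigma> k)"

text \<open>Continuous \<open>H\<close>-valued 1-cocycles on \<open>\<G>(X,\<sigma>)\<close> (only values on the groupoid matter).\<close>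
definition cont_cocycle :: "'a::topological_space set \<Rightarrow> (nat \<Rightarrow> 'a \<Rightarrow> 'a) \<Rightarrow> nat
     \<Rightarrow> ('a \<times> (nat \<Rightarrow> int) \<times> 'a \<Rightarrow> 'h::topological_ab_group_add) \<Rightarrow> bool" where
  "cont_cocycle X \<sigma> k c \<longleftrightarrow>
     continuous_map (grpd_top X \<sigma> k) euclidean c \<and>
     (\<forall>x m y n z. (x, m, y) \<in> grpd X \<sigma> k \<longrightarrow> (y, n, z) \<in> grpd X \<sigma> k \<longrightarrow>
        c (x, (\<lambda>i. m i + n i), z) = c (x, m, y) + c (y, n, z))"

definition coboundary :: "'a::topological_space set \<Rightarrow> (nat \<Rightarrow> 'a \<Rightarrow> 'a) \<Rightarrow> nat
     \<Rightarrow> ('a \<times> (nat \<Rightarrow> int) \<times> 'a \<Rightarrow> 'h::topological_ab_group_add) \<Rightarrow> bool" where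
  "coboundary X \<sigma> k c \<longleftrightarrow>
     (\<exists>f. continuous_on X f \<and> (\<forall>x m y. (x, m, y) \<in> grpd X \<sigma> k \<longrightarrow> c (x, m, y) = f x - f y))"

end

theory Submission
  imports Defs begin

definition delta :: "nat \<Rightarrow> nat \<Rightarrow> nat" where
  "delta i = (\<lambda>j. if j = i then 1 else 0)"

fun psum :: "(nat \<Rightarrow> 'a \<Rightarrow> 'h::comm_monoid_add) \<Rightarrow> (nat \<Rightarrow> 'a \<Rightarrow> 'a) \<Rightarrow> nat \<Rightarrow> nat \<Rightarrow> 'a \<Rightarrow> 'h" where
  "psum \<phi> \<sigma> i 0 x = 0"
| "psum \<phi> \<sigma> i (Suc n) x = psum \<phi> \<sigma> i n x + \<phi> i ((\<sigma> i ^^ n) x)"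

fun Phi :: "(nat \<Rightarrow> 'a \<Rightarrow> 'h::comm_monoid_add) \<Rightarrow> (nat \<Rightarrow> 'a \<Rightarrow> 'a) \<Rightarrow> nat \<Rightarrow> (nat \<Rightarrow> nat) \<Rightarrow> 'a \<Rightarrow> 'h" where
  "Phi \<phi> \<sigma> 0 p x = 0"
| "Phi \<phi> \<sigma> (Suc k) p x = psum \<phi> \<sigma> k (p k) x + Phi \<phi> \<sigma> k p ((\<sigma> k ^^ p k) x)"

lemma ab_aux1: "(c::'h::ab_group_add) + b = f + e \<Longrightarrow> b - e = f - c"
  by (metis add_diff_cancel_left' diff_add_eq_diff_diff_swap diff_diff_eq2)

lemma ab_aux2: "b - e = f - c \<Longrightarrow> (a + b) - (d + (e::'h::ab_group_add)) = (a - c) + (f - d)"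
  by (simp add: algebra_simps)

lemma img_lemma: assumes "A \<subseteq> X" "B \<subseteq> X" shows "f ` (X \<inter> f -` (g ` B) \<inter> A) = g ` (X \<inter> g -` (f ` A) \<inter> B)"
proof (intro equalityI subsetI)
  fix z assume "z \<in> f ` (X \<inter> f -` (g ` B) \<inter> A)"
  then obtain a where a: "a \<in> A" "f a \<in> g ` B" "z = f a" by auto
  then obtain b where b: "b \<in> B" "f a = g b" by auto
  have "g b \<in> f ` A" using image_eqI[of "g b" f a A] a b by simp
  then have "b \<in> X \<inter> g -` (f ` A) \<inter> B" using b assms by auto
  then show "z \<in> g ` (X \<inter> g -` (f ` A) \<inter> B)" using a b by simp
next
  fix z assume "z \<in> g ` (X \<inter> g -` (f ` A) \<inter> B)"
  then obtain b where b: "b \<in> B" "g b \<in> f ` A" "z = g b" by auto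
  then obtain a where a: "a \<in> A" "g b = f a" by auto
  have "f a \<in> g ` B" using image_eqI[of "f a" g b B] a b by simp
  then have "a \<in> X \<inter> f -` (g ` B) \<inter> A" using a assms by auto
  then show "z \<in> f ` (X \<inter> f -` (g ` B) \<inter> A)" using a b by simp
qed

lemma idx_induct[consumes 1, case_names zero step]:
  assumes "idx k r" "P (\<lambda>_. 0)"
    "\<And>r i. idx k r \<Longrightarrow> i < k \<Longrightarrow> P r \<Longrightarrow> P (\<lambda>l. r l + delta i l)"
  shows "P r"
  using assms(1)
proof (induction "sum r {..<k}" arbitrary: r)
  case 0
  then have "r = (\<lambda>_. 0)" unfolding idx_def fun_eq_iff by (metis finite_lessThan lessThan_iff not_less sum_eq_0_iff)
  then show ?case using assms(2) by simp
next
  case (Suc n)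
  then obtain i where i: "i < k" "r i > 0"
    by (metis lessThan_iff not_gr0 sum.neutral nat.distinct(1))
  define r' where "r' = r(i := r i - 1)"
  have r: "r = (\<lambda>l. r' l + delta i l)" using i by (auto simp: r'_def delta_def fun_eq_iff)
  have idx: "idx k r'" using Suc.prems i by (auto simp: idx_def r'_def)
  have "sum r {..<k} = sum r' {..<k} + sum (delta i) {..<k}"
    by (subst r) (simp add: sum.distrib)
  moreover have "sum (delta i) {..<k} = 1" using i unfolding delta_def
    by (simp add: sum.delta)
  ultimately have "n = sum r' {..<k}" using Suc.hyps(2) by simp
  then have "P r'" using Suc.hyps(1) idx by blast
  then show ?case using assms(3)[OF idx i(1)] r by simp
qed

lemma spow_cong: "(\<And>l. l < k' \<Longrightarrow> p l = p' l) \<Longrightarrow> spow \<sigma> k' p = spow \<sigma> k' p'"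
  by (induction k') auto

lemma Phi_cong: "(\<And>l. l < k' \<Longrightarrow> p l = p' l) \<Longrightarrow> Phi \<phi> \<sigma> k' p = Phi \<phi> \<sigma> k' p'"
proof (induction k')
  case (Suc k') then show ?case by (auto simp: fun_eq_iff)
qed (simp add: fun_eq_iff)

lemma spow_zero: "spow \<sigma> k' (\<lambda>_. 0) = id"
  by (induction k') auto

lemma Phi_zero: "Phi \<phi> \<sigma> k' (\<lambda>_. 0) x = 0"
  by (induction k' arbitrary: x) auto

lemma psum_shift: "psum \<phi> \<sigma> i (Suc n) x = \<phi> i x + psum \<phi> \<sigma> i n (\<sigma> i x)"
proof (induction n)
  case (Suc n)
  then show ?case by (simp add: add.assoc funpow_swap1)
qed simp

definition cfun :: "(nat \<Rightarrow> 'a \<Rightarrow> 'h::ab_group_add) \<Rightarrow> (nat \<Rightarrow> 'a \<Rightarrow> 'a) \<Rightarrow> nat \<Rightarrow> 'a \<times> (nat \<Rightarrow> int) \<times> 'a \<Rightarrow> 'h" where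
  "cfun \<phi> \<sigma> k g = (case g of (x, m, y) \<Rightarrow>
     (let pq = (SOME pq. idx k (fst pq) \<and> idx k (snd pq) \<and> m = vdiff (fst pq) (snd pq) \<and>
                 spow \<sigma> k (fst pq) x = spow \<sigma> k (snd pq) y)
      in Phi \<phi> \<sigma> k (fst pq) x - Phi \<phi> \<sigma> k (snd pq) y))"

context
  fixes X :: "'a::topological_space set" and \<sigma> :: "nat \<Rightarrow> 'a \<Rightarrow> 'a" and k :: nat
  assumes maps0: "\<forall>i<k. \<forall>x\<in>X. \<sigma> i x \<in> X"
    and comm0: "\<forall>i<k. \<forall>j<k. \<forall>x\<in>X. \<sigma> i (\<sigma> j x) = \<sigma> j (\<sigma> i x)"
begin

lemma maps: "i < k \<Longrightarrow> x \<in> X \<Longrightarrow> \<sigma> i x \<in> X" using maps0 by blast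
lemma comm: "i < k \<Longrightarrow> j < k \<Longrightarrow> x \<in> X \<Longrightarrow> \<sigma> i (\<sigma> j x) = \<sigma> j (\<sigma> i x)" using comm0 by blast

lemma funpow_maps: "i < k \<Longrightarrow> x \<in> X \<Longrightarrow> (\<sigma> i ^^ n) x \<in> X"
  by (induction n) (auto intro: maps)

lemma funpow_comm: "i < k \<Longrightarrow> j < k \<Longrightarrow> x \<in> X \<Longrightarrow> (\<sigma> i ^^ n) (\<sigma> j x) = \<sigma> j ((\<sigma> i ^^ n) x)"
  by (induction n) (auto simp: comm funpow_maps)

lemma spow_maps: "k' \<le> k \<Longrightarrow> x \<in> X \<Longrightarrow> spow \<sigma> k' p x \<in> X"
proof (induction k' arbitrary: x)
  case (Suc k')
  then show ?case using funpow_maps[of k' x "p k'"] by simp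
qed simp

lemma spow_comm: "k' \<le> k \<Longrightarrow> j < k \<Longrightarrow> x \<in> X \<Longrightarrow> spow \<sigma> k' p (\<sigma> j x) = \<sigma> j (spow \<sigma> k' p x)"
proof (induction k' arbitrary: x)
  case (Suc k')
  then show ?case by (simp add: funpow_comm funpow_maps)
qed simp

lemma spow_step: "k' \<le> k \<Longrightarrow> i < k' \<Longrightarrow> x \<in> X \<Longrightarrow>
   spow \<sigma> k' (\<lambda>l. p l + delta i l) x = spow \<sigma> k' p (\<sigma> i x)"
proof (induction k' arbitrary: x)
  case 0 then show ?case by simp
next
  case (Suc k')
  have cg: "spow \<sigma> k' (\<lambda>l. p l + delta k' l) = spow \<sigma> k' p"
    by (rule spow_cong) (simp add: delta_def)
  show ?case
  proof (cases "i = k'")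
    case True
    then show ?thesis using Suc.prems by (simp only: spow.simps comp_def cg) (simp add: delta_def funpow_swap1)
  next
    case False
    then have "i < k'" using Suc.prems by simp
    then show ?thesis using Suc by (simp add: delta_def funpow_maps funpow_comm)
  qed
qed

lemma spow_add: "idx k r \<Longrightarrow> x \<in> X \<Longrightarrow> spow \<sigma> k (\<lambda>l. p l + r l) x = spow \<sigma> k p (spow \<sigma> k r x)"
proof (induction r arbitrary: x rule: idx_induct)
  case zero then show ?case by (simp add: spow_zero)
next
  case (step r i)
  have "spow \<sigma> k (\<lambda>l. p l + (r l + delta i l)) x = spow \<sigma> k (\<lambda>l. (p l + r l) + delta i l) x"
    by (simp add: add.assoc)
  also have "\<dots> = spow \<sigma> k (\<lambda>l. p l + r l) (\<sigma> i x)" using step by (simp add: spow_step)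
  also have "\<dots> = spow \<sigma> k p (spow \<sigma> k r (\<sigma> i x))" using step maps by simp
  also have "\<dots> = spow \<sigma> k p (spow \<sigma> k (\<lambda>l. r l + delta i l) x)" using step by (simp add: spow_step)
  finally show ?case .
qed


lemma spow_delta: "i < k \<Longrightarrow> x \<in> X \<Longrightarrow> spow \<sigma> k (delta i) x = \<sigma> i x"
  using spow_step[of k i x "\<lambda>_. 0"] by (simp add: spow_zero)

lemma idx_delta: "i < k \<Longrightarrow> idx k (delta i)"
  by (auto simp: idx_def delta_def)

lemma idx_zero: "idx k (\<lambda>_. 0)"
  by (auto simp: idx_def)

lemma G_gen: assumes "i < k" "x \<in> X" shows "(x, unitvec i, \<sigma> i x) \<in> grpd X \<sigma> k"
proof -
  have "unitvec i = vdiff (delta i) (\<lambda>_. 0)" by (auto simp: vdiff_def unitvec_def delta_def fun_eq_iff)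
  then have "idx k (delta i) \<and> idx k (\<lambda>_. 0) \<and> unitvec i = vdiff (delta i) (\<lambda>_. 0) \<and> spow \<sigma> k (delta i) x = spow \<sigma> k (\<lambda>_. 0) (\<sigma> i x)" using assms by (auto simp: idx_delta idx_zero spow_delta spow_zero)
  then show ?thesis unfolding grpd_def using assms by (auto simp: maps spow_maps)
qed

lemma G_path: assumes "idx k p" "x \<in> X" shows "(x, \<lambda>l. int (p l), spow \<sigma> k p x) \<in> grpd X \<sigma> k"
proof -
  have "idx k (p) \<and> idx k (\<lambda>_. 0) \<and> (\<lambda>l. int (p l)) = vdiff p (\<lambda>_. 0) \<and> spow \<sigma> k p x = spow \<sigma> k (\<lambda>_. 0) (spow \<sigma> k p x)" using assms by (auto simp: idx_zero spow_zero vdiff_def)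
  then show ?thesis unfolding grpd_def using assms by (auto simp: maps spow_maps)
qed

lemma G_inv: assumes "idx k q" "y \<in> X" shows "(spow \<sigma> k q y, \<lambda>l. - int (q l), y) \<in> grpd X \<sigma> k"
proof -
  have "idx k (\<lambda>_. 0) \<and> idx k (q) \<and> (\<lambda>l. - int (q l)) = vdiff (\<lambda>_. 0) q \<and> spow \<sigma> k (\<lambda>_. 0) (spow \<sigma> k q y) = spow \<sigma> k q y" using assms by (auto simp: idx_zero spow_zero vdiff_def)
  then show ?thesis unfolding grpd_def using assms by (auto simp: maps spow_maps)
qed

lemma G_unit: assumes "x \<in> X" shows "(x, \<lambda>_. 0, x) \<in> grpd X \<sigma> k"
proof -
  have "idx k (\<lambda>_. 0) \<and> idx k (\<lambda>_. 0) \<and> (\<lambda>_. 0) = vdiff (\<lambda>_. 0) (\<lambda>_. 0::nat) \<and> spow \<sigma> k (\<lambda>_. 0) x = spow \<sigma> k (\<lambda>_. 0) x" using assms by (auto simp: idx_zero spow_zero vdiff_def)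
  then show ?thesis unfolding grpd_def using assms by (auto simp: maps spow_maps)
qed

definition cocyc :: "('a \<times> (nat \<Rightarrow> int) \<times> 'a \<Rightarrow> 'h::ab_group_add) \<Rightarrow> bool" where
  "cocyc c \<longleftrightarrow> (\<forall>x m y n z. (x, m, y) \<in> grpd X \<sigma> k \<longrightarrow> (y, n, z) \<in> grpd X \<sigma> k \<longrightarrow>
        c (x, (\<lambda>i. m i + n i), z) = c (x, m, y) + c (y, n, z))"

lemma cocycD: "cocyc c \<Longrightarrow> (x, m, y) \<in> grpd X \<sigma> k \<Longrightarrow> (y, n, z) \<in> grpd X \<sigma> k \<Longrightarrow>
        c (x, (\<lambda>i. m i + n i), z) = c (x, m, y) + c (y, n, z)"
  unfolding cocyc_def by blast

lemma cocyc_unit: "cocyc c \<Longrightarrow> x \<in> X \<Longrightarrow> c (x, \<lambda>_. 0, x) = 0"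
proof -
  assume a: "cocyc c" "x \<in> X"
  have "c (x, \<lambda>i. (\<lambda>_. 0) i + (\<lambda>_. 0) i, x) = c (x, \<lambda>_. 0, x) + c (x, \<lambda>_. 0, x)"
    using a G_unit unfolding cocyc_def by blast
  then show ?thesis by simp
qed

lemma cocyc_path:
  assumes c: "cocyc c" "cocyc c'" and gen: "\<And>i x. i < k \<Longrightarrow> x \<in> X \<Longrightarrow> c (x, unitvec i, \<sigma> i x) = c' (x, unitvec i, \<sigma> i x)"
  shows "idx k p \<Longrightarrow> x \<in> X \<Longrightarrow> c (x, \<lambda>l. int (p l), spow \<sigma> k p x) = c' (x, \<lambda>l. int (p l), spow \<sigma> k p x)"
proof (induction p arbitrary: x rule: idx_induct)
  case zero then show ?case using c by (simp add: spow_zero cocyc_unit)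
next
  case (step r i)
  have e: "(\<lambda>l. int (r l + delta i l)) = (\<lambda>j. unitvec i j + (\<lambda>l. int (r l)) j)"
    by (auto simp: fun_eq_iff unitvec_def delta_def)
  have sp: "spow \<sigma> k (\<lambda>l. r l + delta i l) x = spow \<sigma> k r (\<sigma> i x)" using step by (simp add: spow_step)
  have g1: "(x, unitvec i, \<sigma> i x) \<in> grpd X \<sigma> k" using step by (simp add: G_gen)
  have g2: "(\<sigma> i x, \<lambda>l. int (r l), spow \<sigma> k r (\<sigma> i x)) \<in> grpd X \<sigma> k"
    using step by (simp add: G_path maps)
  have A: "d (x, \<lambda>l. int (r l + delta i l), spow \<sigma> k (\<lambda>l. r l + delta i l) x)
      = d (x, unitvec i, \<sigma> i x) + d (\<sigma> i x, \<lambda>l. int (r l), spow \<sigma> k r (\<sigma> i x))" if "cocyc d" for d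
    unfolding e sp using cocycD[OF that g1 g2] .
  have IH: "c (\<sigma> i x, \<lambda>l. int (r l), spow \<sigma> k r (\<sigma> i x)) = c' (\<sigma> i x, \<lambda>l. int (r l), spow \<sigma> k r (\<sigma> i x))"
    using step.IH maps step.hyps step.prems by blast
  have G: "c (x, unitvec i, \<sigma> i x) = c' (x, unitvec i, \<sigma> i x)" using gen step.hyps step.prems by blast
  show ?case unfolding A[OF c(1)] A[OF c(2)] IH G ..
qed

lemma cocyc_val:
  assumes c: "cocyc c" and "idx k p" "idx k q" "x \<in> X" "y \<in> X" "spow \<sigma> k p x = spow \<sigma> k q y"
  shows "c (x, vdiff p q, y) = c (x, \<lambda>l. int (p l), spow \<sigma> k p x) - c (y, \<lambda>l. int (q l), spow \<sigma> k q y)"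
proof -
  define z where "z = spow \<sigma> k q y"
  have g1: "(x, \<lambda>l. int (p l), z) \<in> grpd X \<sigma> k" unfolding z_def assms(6)[symmetric] using assms(2,4) by (rule G_path)
  have g2: "(z, \<lambda>l. - int (q l), y) \<in> grpd X \<sigma> k" unfolding z_def using assms(3,5) by (rule G_inv)
  have g3: "(y, \<lambda>l. int (q l), z) \<in> grpd X \<sigma> k" unfolding z_def using assms(3,5) by (rule G_path)
  have e1: "vdiff p q = (\<lambda>i. (\<lambda>l. int (p l)) i + (\<lambda>l. - int (q l)) i)" by (simp add: vdiff_def fun_eq_iff)
  have e2: "(\<lambda>_. 0) = (\<lambda>i. (\<lambda>l. - int (q l)) i + (\<lambda>l. int (q l)) i)" by (simp add: fun_eq_iff)
  have cc: "\<And>x m y n z. (x, m, y) \<in> grpd X \<sigma> k \<Longrightarrow> (y, n, z) \<in> grpd X \<sigma> k \<Longrightarrow>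
        c (x, (\<lambda>i. m i + n i), z) = c (x, m, y) + c (y, n, z)" using c unfolding cocyc_def by blast
  have 1: "c (x, vdiff p q, y) = c (x, \<lambda>l. int (p l), z) + c (z, \<lambda>l. - int (q l), y)"
    unfolding e1 by (rule cc[OF g1 g2])
  have 2: "c (z, \<lambda>_. 0, z) = c (z, \<lambda>l. - int (q l), y) + c (y, \<lambda>l. int (q l), z)"
    unfolding e2 by (rule cc[OF g2 g3])
  have "z \<in> X" using assms by (simp add: z_def spow_maps)
  then have "c (z, \<lambda>_. 0, z) = 0" using c by (intro cocyc_unit)
  then have "c (z, \<lambda>l. - int (q l), y) + c (y, \<lambda>l. int (q l), z) = 0" using 2 by simp
  then have "c (z, \<lambda>l. - int (q l), y) = - c (y, \<lambda>l. int (q l), z)"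
    by (simp add: eq_neg_iff_add_eq_0)
  then show ?thesis using 1 assms(6) by (simp add: z_def[symmetric])
qed

lemma cocyc_unique:
  assumes c: "cocyc c" "cocyc c'" and gen: "\<And>i x. i < k \<Longrightarrow> x \<in> X \<Longrightarrow> c (x, unitvec i, \<sigma> i x) = c' (x, unitvec i, \<sigma> i x)"
    and g: "g \<in> grpd X \<sigma> k"
  shows "c g = c' g"
proof -
  obtain x p q y where g: "g = (x, vdiff p q, y)" "idx k p" "idx k q" "x \<in> X" "y \<in> X" "spow \<sigma> k p x = spow \<sigma> k q y"
    using g unfolding grpd_def by blast
  show ?thesis using g cocyc_val[OF c(1) g(2-6)] cocyc_val[OF c(2) g(2-6)]
      cocyc_path[OF c gen g(2,4)] cocyc_path[OF c gen g(3,5)] by simp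
qed

lemma cocyc_cond:
  assumes c: "cocyc c" and "i < k" "j < k" "x \<in> X"
  shows "c (x, unitvec i, \<sigma> i x) + c (\<sigma> i x, unitvec j, \<sigma> j (\<sigma> i x))
       = c (x, unitvec j, \<sigma> j x) + c (\<sigma> j x, unitvec i, \<sigma> i (\<sigma> j x))"
proof -
  have "c (x, unitvec i, \<sigma> i x) + c (\<sigma> i x, unitvec j, \<sigma> j (\<sigma> i x)) = c (x, \<lambda>l. unitvec i l + unitvec j l, \<sigma> j (\<sigma> i x))"
    using cocycD[OF c G_gen[OF assms(2,4)] G_gen[OF assms(3) maps[OF assms(2,4)]]] by simp
  also have "\<dots> = c (x, \<lambda>l. unitvec j l + unitvec i l, \<sigma> i (\<sigma> j x))"
    using assms comm by (simp add: add.commute)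
  also have "\<dots> = c (x, unitvec j, \<sigma> j x) + c (\<sigma> j x, unitvec i, \<sigma> i (\<sigma> j x))"
    using cocycD[OF c G_gen[OF assms(3,4)] G_gen[OF assms(2) maps[OF assms(3,4)]]] by simp
  finally show ?thesis .
qed

context
  fixes \<phi> :: "nat \<Rightarrow> 'a \<Rightarrow> 'h::ab_group_add"
  assumes cond0: "\<forall>i<k. \<forall>j<k. \<forall>x\<in>X. \<phi> i x + \<phi> j (\<sigma> i x) = \<phi> j x + \<phi> i (\<sigma> j x)"
begin

lemma cond: "i < k \<Longrightarrow> j < k \<Longrightarrow> x \<in> X \<Longrightarrow> \<phi> i x + \<phi> j (\<sigma> i x) = \<phi> j x + \<phi> i (\<sigma> j x)" using cond0 by blast

lemma psum_comm: "i < k \<Longrightarrow> j < k \<Longrightarrow> x \<in> X \<Longrightarrow>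
  psum \<phi> \<sigma> j n x + \<phi> i ((\<sigma> j ^^ n) x) = \<phi> i x + psum \<phi> \<sigma> j n (\<sigma> i x)"
proof (induction n)
  case 0 then show ?case by simp
next
  case (Suc n)
  define y where "y = (\<sigma> j ^^ n) x"
  have y: "y \<in> X" using Suc.prems by (simp add: y_def funpow_maps)
  have "psum \<phi> \<sigma> j (Suc n) x + \<phi> i ((\<sigma> j ^^ Suc n) x)
      = psum \<phi> \<sigma> j n x + (\<phi> j y + \<phi> i (\<sigma> j y))" by (simp add: y_def add.assoc)
  also have "\<dots> = psum \<phi> \<sigma> j n x + \<phi> i y + \<phi> j (\<sigma> i y)"
    using cond[OF Suc.prems(1,2) y] by (simp add: add.assoc)
  also have "\<dots> = \<phi> i x + psum \<phi> \<sigma> j n (\<sigma> i x) + \<phi> j (\<sigma> i y)"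
    using Suc by (simp add: y_def)
  also have "\<sigma> i y = (\<sigma> j ^^ n) (\<sigma> i x)" using Suc.prems by (simp add: y_def funpow_comm)
  finally show ?case by (simp add: add.assoc)
qed

lemma Phi_step: "k' \<le> k \<Longrightarrow> i < k' \<Longrightarrow> x \<in> X \<Longrightarrow>
   Phi \<phi> \<sigma> k' (\<lambda>l. p l + delta i l) x = \<phi> i x + Phi \<phi> \<sigma> k' p (\<sigma> i x)"
proof (induction k' arbitrary: x)
  case 0 then show ?case by simp
next
  case (Suc k')
  have cg: "Phi \<phi> \<sigma> k' (\<lambda>l. p l + delta k' l) = Phi \<phi> \<sigma> k' p"
    by (rule Phi_cong) (simp add: delta_def)
  show ?case
  proof (cases "i = k'")
    case True
    have "Phi \<phi> \<sigma> (Suc k') (\<lambda>l. p l + delta i l) x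
        = psum \<phi> \<sigma> k' (Suc (p k')) x + Phi \<phi> \<sigma> k' p ((\<sigma> k' ^^ Suc (p k')) x)"
      using True by (simp only: Phi.simps cg) (simp add: delta_def)
    also have "\<dots> = \<phi> i x + Phi \<phi> \<sigma> (Suc k') p (\<sigma> i x)"
      using True by (simp only: psum_shift) (simp add: funpow_swap1 add.assoc)
    finally show ?thesis .
  next
    case False
    then have ik: "i < k'" using Suc.prems by simp
    define y where "y = (\<sigma> k' ^^ p k') x"
    have y: "y \<in> X" using Suc.prems by (simp add: y_def funpow_maps)
    have "Phi \<phi> \<sigma> (Suc k') (\<lambda>l. p l + delta i l) x
        = psum \<phi> \<sigma> k' (p k') x + Phi \<phi> \<sigma> k' (\<lambda>l. p l + delta i l) y"
      using False by (simp add: delta_def y_def)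
    also have "\<dots> = psum \<phi> \<sigma> k' (p k') x + \<phi> i y + Phi \<phi> \<sigma> k' p (\<sigma> i y)"
      using Suc.IH[of y] Suc.prems ik y by (simp add: add.assoc)
    also have "psum \<phi> \<sigma> k' (p k') x + \<phi> i y = \<phi> i x + psum \<phi> \<sigma> k' (p k') (\<sigma> i x)"
      unfolding y_def using Suc.prems ik by (intro psum_comm) auto
    also have "\<sigma> i y = (\<sigma> k' ^^ p k') (\<sigma> i x)" using Suc.prems ik by (simp add: y_def funpow_comm)
    finally show ?thesis by (simp add: add.assoc)
  qed
qed

lemma Phi_add: "idx k r \<Longrightarrow> x \<in> X \<Longrightarrow>
   Phi \<phi> \<sigma> k (\<lambda>l. p l + r l) x = Phi \<phi> \<sigma> k r x + Phi \<phi> \<sigma> k p (spow \<sigma> k r x)"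
proof (induction r arbitrary: x rule: idx_induct)
  case zero then show ?case by (simp add: spow_zero Phi_zero)
next
  case (step r i)
  have "Phi \<phi> \<sigma> k (\<lambda>l. p l + (r l + delta i l)) x = Phi \<phi> \<sigma> k (\<lambda>l. (p l + r l) + delta i l) x"
    by (simp add: add.assoc)
  also have "\<dots> = \<phi> i x + Phi \<phi> \<sigma> k (\<lambda>l. p l + r l) (\<sigma> i x)" using step by (simp add: Phi_step)
  also have "\<dots> = \<phi> i x + (Phi \<phi> \<sigma> k r (\<sigma> i x) + Phi \<phi> \<sigma> k p (spow \<sigma> k r (\<sigma> i x)))"
    using step maps by simp
  also have "\<dots> = Phi \<phi> \<sigma> k (\<lambda>l. r l + delta i l) x + Phi \<phi> \<sigma> k p (spow \<sigma> k (\<lambda>l. r l + delta i l) x)"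
    using step by (simp add: spow_step Phi_step add.assoc)
  finally show ?case .
qed


lemma spow_add_comm: "idx k r \<Longrightarrow> idx k p \<Longrightarrow> x \<in> X \<Longrightarrow> spow \<sigma> k p (spow \<sigma> k r x) = spow \<sigma> k r (spow \<sigma> k p x)"
proof -
  assume a: "idx k r" "idx k p" "x \<in> X"
  have "spow \<sigma> k p (spow \<sigma> k r x) = spow \<sigma> k (\<lambda>l. p l + r l) x" using a by (simp add: spow_add)
  also have "(\<lambda>l. p l + r l) = (\<lambda>l. r l + p l)" by (simp add: add.commute)
  also have "spow \<sigma> k \<dots> x = spow \<sigma> k r (spow \<sigma> k p x)" using a by (simp add: spow_add)
  finally show ?thesis .
qed

lemma Phi_welldef:
  assumes "idx k p" "idx k q" "idx k p'" "idx k q'" "x \<in> X" "y \<in> X"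
    "spow \<sigma> k p x = spow \<sigma> k q y" "spow \<sigma> k p' x = spow \<sigma> k q' y" "vdiff p q = vdiff p' q'"
  shows "Phi \<phi> \<sigma> k p x - Phi \<phi> \<sigma> k q y = Phi \<phi> \<sigma> k p' x - Phi \<phi> \<sigma> k q' y"
proof -
  define s where "s = (\<lambda>l. max (p l) (p' l) - p l)"
  define s' where "s' = (\<lambda>l. max (p l) (p' l) - p' l)"
  have v: "int (p l) - int (q l) = int (p' l) - int (q' l)" for l
    using assms(9) unfolding vdiff_def by meson
  have e1: "(\<lambda>l. s l + p l) = (\<lambda>l. s' l + p' l)" by (auto simp: s_def s'_def fun_eq_iff)
  have e2: "(\<lambda>l. s l + q l) = (\<lambda>l. s' l + q' l)"
  proof
    fix l show "s l + q l = s' l + q' l" using v[of l] unfolding s_def s'_def by linarith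
  qed
  have "Phi \<phi> \<sigma> k (\<lambda>l. s l + p l) x - Phi \<phi> \<sigma> k (\<lambda>l. s l + q l) y = Phi \<phi> \<sigma> k p x - Phi \<phi> \<sigma> k q y"
    using assms by (simp add: Phi_add)
  moreover have "Phi \<phi> \<sigma> k (\<lambda>l. s' l + p' l) x - Phi \<phi> \<sigma> k (\<lambda>l. s' l + q' l) y = Phi \<phi> \<sigma> k p' x - Phi \<phi> \<sigma> k q' y"
    using assms by (simp add: Phi_add)
  ultimately show ?thesis using e1 e2 by simp
qed

lemma cfun_eq:
  assumes "idx k p" "idx k q" "x \<in> X" "y \<in> X" "spow \<sigma> k p x = spow \<sigma> k q y"
  shows "cfun \<phi> \<sigma> k (x, vdiff p q, y) = Phi \<phi> \<sigma> k p x - Phi \<phi> \<sigma> k q y"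
proof -
  let ?P = "\<lambda>pq. idx k (fst pq) \<and> idx k (snd pq) \<and> vdiff p q = vdiff (fst pq) (snd pq) \<and>
                 spow \<sigma> k (fst pq) x = spow \<sigma> k (snd pq) y"
  define pq where "pq = (SOME pq. ?P pq)"
  have "?P (p, q)" using assms by simp
  from someI[of ?P "(p, q)", OF this] have P: "?P pq" unfolding pq_def .
  have "cfun \<phi> \<sigma> k (x, vdiff p q, y) = Phi \<phi> \<sigma> k (fst pq) x - Phi \<phi> \<sigma> k (snd pq) y"
    by (simp only: cfun_def pq_def Let_def prod.case)
  also have "\<dots> = Phi \<phi> \<sigma> k p x - Phi \<phi> \<sigma> k q y"
    using P by (intro Phi_welldef[OF assms(1,2) _ _ assms(3,4,5), symmetric]) blast+
  finally show ?thesis .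
qed

lemma Phi_delta: "i < k \<Longrightarrow> x \<in> X \<Longrightarrow> Phi \<phi> \<sigma> k (delta i) x = \<phi> i x"
  using Phi_step[of k i x "\<lambda>_. 0"] by (simp add: Phi_zero)

lemma cfun_gen: assumes "i < k" "x \<in> X" shows "cfun \<phi> \<sigma> k (x, unitvec i, \<sigma> i x) = \<phi> i x"
proof -
  have u: "unitvec i = vdiff (delta i) (\<lambda>_. 0)" by (auto simp: vdiff_def unitvec_def delta_def fun_eq_iff)
  have "spow \<sigma> k (delta i) x = spow \<sigma> k (\<lambda>_. 0) (\<sigma> i x)" using assms by (simp add: spow_delta spow_zero)
  then show ?thesis unfolding u using assms cfun_eq[of "delta i" "\<lambda>_. 0" x "\<sigma> i x"]
    by (simp add: idx_delta idx_zero maps Phi_delta Phi_zero)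
qed

lemma cfun_cocycle:
  assumes "(x, m, y) \<in> grpd X \<sigma> k" "(y, n, z) \<in> grpd X \<sigma> k"
  shows "cfun \<phi> \<sigma> k (x, (\<lambda>i. m i + n i), z) = cfun \<phi> \<sigma> k (x, m, y) + cfun \<phi> \<sigma> k (y, n, z)"
proof -
  obtain p q where pq: "idx k p" "idx k q" "m = vdiff p q" "spow \<sigma> k p x = spow \<sigma> k q y" "x \<in> X" "y \<in> X"
    using assms(1) unfolding grpd_def by auto
  obtain p' q' where pq': "idx k p'" "idx k q'" "n = vdiff p' q'" "spow \<sigma> k p' y = spow \<sigma> k q' z" "z \<in> X"
    using assms(2) unfolding grpd_def by auto
  define P where "P = (\<lambda>l. p' l + p l)"
  define Q where "Q = (\<lambda>l. q l + q' l)"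
  have iP: "idx k P" "idx k Q" using pq pq' by (auto simp: idx_def P_def Q_def)
  have mn: "(\<lambda>i. m i + n i) = vdiff P Q" using pq pq' by (auto simp: vdiff_def P_def Q_def fun_eq_iff)
  have sp: "spow \<sigma> k P x = spow \<sigma> k Q z"
  proof -
    have "spow \<sigma> k P x = spow \<sigma> k p' (spow \<sigma> k q y)" using pq by (simp add: P_def spow_add)
    also have "\<dots> = spow \<sigma> k q (spow \<sigma> k p' y)" using pq pq' by (intro spow_add_comm) auto
    also have "\<dots> = spow \<sigma> k Q z" using pq pq' by (simp add: Q_def spow_add)
    finally show ?thesis .
  qed
  have c1: "cfun \<phi> \<sigma> k (x, (\<lambda>i. m i + n i), z) = Phi \<phi> \<sigma> k P x - Phi \<phi> \<sigma> k Q z"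
    using mn sp iP pq pq' by (simp add: cfun_eq)
  have h1: "Phi \<phi> \<sigma> k P x = Phi \<phi> \<sigma> k p x + Phi \<phi> \<sigma> k p' (spow \<sigma> k q y)"
    using pq by (simp add: P_def Phi_add)
  have h2: "Phi \<phi> \<sigma> k Q z = Phi \<phi> \<sigma> k q' z + Phi \<phi> \<sigma> k q (spow \<sigma> k p' y)"
    using pq pq' by (simp add: Q_def Phi_add)
  have h3: "Phi \<phi> \<sigma> k q y + Phi \<phi> \<sigma> k p' (spow \<sigma> k q y) = Phi \<phi> \<sigma> k p' y + Phi \<phi> \<sigma> k q (spow \<sigma> k p' y)"
  proof -
    have "Phi \<phi> \<sigma> k (\<lambda>l. p' l + q l) y = Phi \<phi> \<sigma> k (\<lambda>l. q l + p' l) y" by (simp add: add.commute)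
    then show ?thesis using pq pq' by (simp add: Phi_add)
  qed
  have c2: "cfun \<phi> \<sigma> k (x, m, y) = Phi \<phi> \<sigma> k p x - Phi \<phi> \<sigma> k q y" using pq by (simp add: cfun_eq)
  have c3: "cfun \<phi> \<sigma> k (y, n, z) = Phi \<phi> \<sigma> k p' y - Phi \<phi> \<sigma> k q' z" using pq pq' by (simp add: cfun_eq)
  show ?thesis unfolding c1 c2 c3 h1 h2 by (rule ab_aux2[OF ab_aux1[OF h3]])
qed

end


lemma lh_open:
  assumes "local_homeo_on X f" "openin (top_of_set X) U"
  shows "openin (top_of_set X) (f ` U)"
proof (subst openin_subopen, intro ballI)
  fix y assume "y \<in> f ` U"
  then obtain x where x: "x \<in> U" "y = f x" by auto
  have "x \<in> X" using assms(2) x openin_imp_subset by blast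
  then obtain V g where V: "x \<in> V" "openin (top_of_set X) V" "openin (top_of_set X) (f ` V)"
      "homeomorphism V (f ` V) f g"
    using assms(1) unfolding local_homeo_on_def by blast
  have "openin (top_of_set X) (U \<inter> V)" using assms(2) V(2) by blast
  then have "openin (top_of_set V) (U \<inter> V)" by (rule openin_subset_trans) (use V(2) openin_imp_subset in auto)
  then have "openin (top_of_set (f ` V)) (f ` (U \<inter> V))" by (rule homeomorphism_imp_open_map[OF V(4)])
  then have "openin (top_of_set X) (f ` (U \<inter> V))" using V(3) openin_trans by blast
  then show "\<exists>T. openin (top_of_set X) T \<and> y \<in> T \<and> T \<subseteq> f ` U" using x V by blast
qed

context
  assumes cont0: "\<forall>i<k. continuous_on X (\<sigma> i)"
    and lh0: "\<forall>i<k. local_homeo_on X (\<sigma> i)"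
    and surj0: "\<forall>i<k. \<sigma> i ` X = X"
begin

lemma cont: "i < k \<Longrightarrow> continuous_on X (\<sigma> i)" using cont0 by blast
lemma lh: "i < k \<Longrightarrow> local_homeo_on X (\<sigma> i)" using lh0 by blast
lemma surj: "i < k \<Longrightarrow> \<sigma> i ` X = X" using surj0 by blast

lemma funpow_cont: "i < k \<Longrightarrow> continuous_on X (\<sigma> i ^^ n)"
proof (induction n)
  case 0 then show ?case by (simp add: continuous_on_id)
next
  case (Suc n)
  have "continuous_on X (\<lambda>x. \<sigma> i ((\<sigma> i ^^ n) x))"
    by (rule continuous_on_compose2[OF cont Suc.IH]) (use Suc.prems funpow_maps in auto)
  then show ?case by (simp add: o_def)
qed

lemma funpow_open: "i < k \<Longrightarrow> openin (top_of_set X) U \<Longrightarrow> openin (top_of_set X) ((\<sigma> i ^^ n) ` U)"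
proof (induction n)
  case 0 then show ?case by simp
next
  case (Suc n)
  have "(\<sigma> i ^^ Suc n) ` U = \<sigma> i ` ((\<sigma> i ^^ n) ` U)" by (simp add: image_image)
  then show ?case using Suc by (simp add: lh_open lh)
qed

lemma funpow_surj: "i < k \<Longrightarrow> (\<sigma> i ^^ n) ` X = X"
proof (induction n)
  case 0 then show ?case by simp
next
  case (Suc n)
  have "(\<sigma> i ^^ Suc n) ` X = \<sigma> i ` ((\<sigma> i ^^ n) ` X)" by (simp add: image_image)
  then show ?case using Suc by (simp add: surj)
qed

lemma spow_cont: "k' \<le> k \<Longrightarrow> continuous_on X (spow \<sigma> k' p)"
proof (induction k')
  case 0 then show ?case by (simp add: continuous_on_id)
next
  case (Suc k')
  have "continuous_on X (\<lambda>x. spow \<sigma> k' p ((\<sigma> k' ^^ p k') x))"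
    by (rule continuous_on_compose2[OF Suc.IH funpow_cont]) (use Suc.prems funpow_maps in auto)
  then show ?case by (simp add: o_def)
qed

lemma spow_open: "k' \<le> k \<Longrightarrow> openin (top_of_set X) U \<Longrightarrow> openin (top_of_set X) (spow \<sigma> k' p ` U)"
proof (induction k' arbitrary: U)
  case 0 then show ?case by simp
next
  case (Suc k')
  have "spow \<sigma> (Suc k') p ` U = spow \<sigma> k' p ` ((\<sigma> k' ^^ p k') ` U)" by (simp add: image_image)
  then show ?case using Suc by (simp add: funpow_open)
qed

lemma spow_surj: "k' \<le> k \<Longrightarrow> spow \<sigma> k' p ` X = X"
proof (induction k')
  case 0 then show ?case by simp
next
  case (Suc k')
  have "spow \<sigma> (Suc k') p ` X = spow \<sigma> k' p ` ((\<sigma> k' ^^ p k') ` X)" by (simp add: image_image)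
  then show ?case using Suc by (simp add: funpow_surj)
qed

lemma Zset_grpd: "idx k p \<Longrightarrow> idx k q \<Longrightarrow> U \<subseteq> X \<Longrightarrow> V \<subseteq> X \<Longrightarrow> Zset \<sigma> k U p q V \<subseteq> grpd X \<sigma> k"
  unfolding Zset_def grpd_def by blast

lemma grpd_topspace: "topspace (grpd_top X \<sigma> k) = grpd X \<sigma> k"
proof -
  have "grpd X \<sigma> k \<subseteq> \<Union> (grpd_basis X \<sigma> k)"
  proof
    fix g assume "g \<in> grpd X \<sigma> k"
    then obtain x p q y where g: "g = (x, vdiff p q, y)" "idx k p" "idx k q" "x \<in> X" "y \<in> X" "spow \<sigma> k p x = spow \<sigma> k q y"
      unfolding grpd_def by blast
    have sx: "spow \<sigma> k p ` X = X" "spow \<sigma> k q ` X = X" by (simp_all add: spow_surj)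
    have ox: "openin (top_of_set X) X" by simp
    have "Zset \<sigma> k X p q X \<in> grpd_basis X \<sigma> k"
      unfolding grpd_basis_def mem_Collect_eq
      apply (rule exI[of _ X]) apply (rule exI[of _ p]) apply (rule exI[of _ q]) apply (rule exI[of _ X])
      using g sx ox by auto
    moreover have "g \<in> Zset \<sigma> k X p q X" using g unfolding Zset_def by blast
    ultimately show "g \<in> \<Union> (grpd_basis X \<sigma> k)" by blast
  qed
  then show ?thesis unfolding grpd_top_def by auto
qed

lemma gen_cont:
  assumes c: "continuous_map (grpd_top X \<sigma> k) euclidean c" and i: "i < k"
  shows "continuous_on X (\<lambda>x. c (x, unitvec i, \<sigma> i x))"
proof -
  let ?h = "\<lambda>x. (x, unitvec i, \<sigma> i x)"
  have "continuous_map (top_of_set X) (topology_generated_by (grpd_basis X \<sigma> k)) ?h"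
  proof (rule continuous_on_generated_topo)
    fix U assume "U \<in> grpd_basis X \<sigma> k"
    then obtain A p q B where U: "U = Zset \<sigma> k A p q B" "openin (top_of_set X) A" "openin (top_of_set X) B"
        "idx k p" "idx k q"
      unfolding grpd_basis_def by blast
    show "openin (top_of_set X) (?h -` U \<inter> topspace (top_of_set X))"
    proof (cases "unitvec i = vdiff p q")
      case True
      have "p = (\<lambda>l. q l + delta i l)"
      proof (rule ext)
        fix l
        have h: "int (p l) - int (q l) = (if l = i then 1 else 0)"
          using fun_cong[OF True, of l] by (simp add: unitvec_def vdiff_def)
        then show "p l = q l + delta i l" unfolding delta_def by (cases "l = i") auto
      qed
      then have sp: "x \<in> X \<Longrightarrow> spow \<sigma> k p x = spow \<sigma> k q (\<sigma> i x)" for x using i by (simp add: spow_step)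
      have "?h -` U \<inter> topspace (top_of_set X) = A \<inter> (X \<inter> \<sigma> i -` B)"
        using U True sp openin_imp_subset[OF U(2)] unfolding Zset_def by auto
      moreover have "openin (top_of_set X) (X \<inter> \<sigma> i -` B)"
        using continuous_openin_preimage[OF cont[OF i] _ U(3)] maps i by blast
      ultimately show ?thesis using U(2) by auto
    next
      case False
      then have "?h -` U \<inter> topspace (top_of_set X) = {}" using U unfolding Zset_def by auto
      then show ?thesis by simp
    qed
  next
    show "?h ` topspace (top_of_set X) \<subseteq> \<Union> (grpd_basis X \<sigma> k)"
      using G_gen[OF i] grpd_topspace unfolding grpd_top_def by auto
  qed
  then have "continuous_map (top_of_set X) (grpd_top X \<sigma> k) ?h"
    unfolding grpd_top_def by (rule continuous_map_into_subtopology) (use G_gen[OF i] in auto)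
  from continuous_map_compose[OF this c] show ?thesis by (simp add: o_def)
qed

context
  fixes \<phi> :: "nat \<Rightarrow> 'a \<Rightarrow> 'h::{topological_ab_group_add}"
  assumes cond1: "\<forall>i<k. \<forall>j<k. \<forall>x\<in>X. \<phi> i x + \<phi> j (\<sigma> i x) = \<phi> j x + \<phi> i (\<sigma> j x)"
    and \<phi>cont0: "\<forall>i<k. continuous_on X (\<phi> i)"
begin

lemma \<phi>cont: "i < k \<Longrightarrow> continuous_on X (\<phi> i)" using \<phi>cont0 by blast

lemma psum_cont: "i < k \<Longrightarrow> continuous_on X (psum \<phi> \<sigma> i n)"
proof (induction n)
  case 0 then show ?case by (simp add: continuous_on_const)
next
  case (Suc n)
  have "continuous_on X (\<lambda>x. \<phi> i ((\<sigma> i ^^ n) x))"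
    by (rule continuous_on_compose2[OF \<phi>cont funpow_cont]) (use Suc.prems funpow_maps in auto)
  then show ?case using Suc by (simp add: continuous_on_add)
qed

lemma Phi_cont: "k' \<le> k \<Longrightarrow> continuous_on X (Phi \<phi> \<sigma> k' p)"
proof (induction k')
  case 0 then show ?case by (simp add: continuous_on_const)
next
  case (Suc k')
  have "continuous_on X (\<lambda>x. Phi \<phi> \<sigma> k' p ((\<sigma> k' ^^ p k') x))"
    by (rule continuous_on_compose2[OF Suc.IH funpow_cont]) (use Suc.prems funpow_maps in auto)
  then show ?case using Suc psum_cont by (simp add: continuous_on_add)
qed

lemma cfun_cont: "continuous_map (grpd_top X \<sigma> k) euclidean (cfun \<phi> \<sigma> k)"
  unfolding continuous_map
proof (intro conjI allI impI)
  show "cfun \<phi> \<sigma> k ` topspace (grpd_top X \<sigma> k) \<subseteq> topspace euclidean" by simp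
next
  fix W :: "'h set" assume "openin euclidean W"
  then have W: "open W" by simp
  show "openin (grpd_top X \<sigma> k) {g \<in> topspace (grpd_top X \<sigma> k). cfun \<phi> \<sigma> k g \<in> W}"
  proof (subst openin_subopen, intro ballI)
    fix g assume gS: "g \<in> {g \<in> topspace (grpd_top X \<sigma> k). cfun \<phi> \<sigma> k g \<in> W}"
    then have "g \<in> grpd X \<sigma> k" by (simp add: grpd_topspace)
    then obtain x p q y where g: "g = (x, vdiff p q, y)" "idx k p" "idx k q" "x \<in> X" "y \<in> X" "spow \<sigma> k p x = spow \<sigma> k q y"
      unfolding grpd_def by blast
    define F where "F = (\<lambda>z. Phi \<phi> \<sigma> k p (fst z) - Phi \<phi> \<sigma> k q (snd z))"
    have "continuous_on (X \<times> X) (\<lambda>z. Phi \<phi> \<sigma> k p (fst z))"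
      by (rule continuous_on_compose2[OF Phi_cont continuous_on_fst[OF continuous_on_id]]) auto
    moreover have "continuous_on (X \<times> X) (\<lambda>z. Phi \<phi> \<sigma> k q (snd z))"
      by (rule continuous_on_compose2[OF Phi_cont continuous_on_snd[OF continuous_on_id]]) auto
    ultimately have Fc: "continuous_on (X \<times> X) F" unfolding F_def by (rule continuous_on_diff)
    have Fopen: "openin (top_of_set (X \<times> X)) ((X \<times> X) \<inter> F -` W)"
      by (rule continuous_openin_preimage_gen[OF Fc W])
    have cg: "cfun \<phi> \<sigma> k g = F (x, y)" unfolding F_def g(1) using g by (simp add: cfun_eq[OF cond1])
    have xyin: "(x, y) \<in> (X \<times> X) \<inter> F -` W" using gS g cg by auto
    obtain A B where AB: "openin (top_of_set X) A" "x \<in> A" "openin (top_of_set X) B" "y \<in> B"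
        "A \<times> B \<subseteq> (X \<times> X) \<inter> F -` W"
      by (rule Times_in_interior_subtopology[OF xyin Fopen])
    have AX: "A \<subseteq> X" and BX: "B \<subseteq> X" using AB openin_imp_subset by auto
    define A' where "A' = X \<inter> spow \<sigma> k p -` (spow \<sigma> k q ` B) \<inter> A"
    define B' where "B' = X \<inter> spow \<sigma> k q -` (spow \<sigma> k p ` A) \<inter> B"
    have "openin (top_of_set X) (X \<inter> spow \<sigma> k p -` (spow \<sigma> k q ` B))"
      by (rule continuous_openin_preimage[OF spow_cont _ spow_open]) (use AB spow_maps in auto)
    then have oA': "openin (top_of_set X) A'" unfolding A'_def using AB(1) by auto
    have "openin (top_of_set X) (X \<inter> spow \<sigma> k q -` (spow \<sigma> k p ` A))"
      by (rule continuous_openin_preimage[OF spow_cont _ spow_open]) (use AB spow_maps in auto)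
    then have oB': "openin (top_of_set X) B'" unfolding B'_def using AB(3) by auto
    have img: "spow \<sigma> k p ` A' = spow \<sigma> k q ` B'"
      unfolding A'_def B'_def using AX BX by (rule img_lemma)
    define T where "T = Zset \<sigma> k A' p q B'"
    have TB: "T \<in> grpd_basis X \<sigma> k" unfolding T_def grpd_basis_def mem_Collect_eq
      apply (rule exI[of _ A']) apply (rule exI[of _ p]) apply (rule exI[of _ q]) apply (rule exI[of _ B'])
      using oA' oB' img g by auto
    have TG: "T \<subseteq> grpd X \<sigma> k" unfolding T_def by (rule Zset_grpd) (use g A'_def B'_def in auto)
    have "openin (grpd_top X \<sigma> k) T"
      unfolding grpd_top_def openin_subtopology
      using topology_generated_by_Basis[OF TB] TG by blast
    moreover have "g \<in> T" unfolding T_def Zset_def A'_def B'_def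
      using g AB image_eqI[of "spow \<sigma> k q y" "spow \<sigma> k p" x A] image_eqI[of "spow \<sigma> k p x" "spow \<sigma> k q" y B] by auto
    moreover have "T \<subseteq> {g \<in> topspace (grpd_top X \<sigma> k). cfun \<phi> \<sigma> k g \<in> W}"
    proof
      fix t assume t: "t \<in> T"
      then obtain x' y' where t': "t = (x', vdiff p q, y')" "x' \<in> A'" "y' \<in> B'" "spow \<sigma> k p x' = spow \<sigma> k q y'"
        unfolding T_def Zset_def by blast
      have "x' \<in> X" "y' \<in> X" "x' \<in> A" "y' \<in> B" using t' unfolding A'_def B'_def by auto
      then have "cfun \<phi> \<sigma> k t = F (x', y')" unfolding F_def t'(1) using g t' by (simp add: cfun_eq[OF cond1])
      moreover have "F (x', y') \<in> W" using AB(5) \<open>x' \<in> A\<close> \<open>y' \<in> B\<close> by auto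
      ultimately show "t \<in> {g \<in> topspace (grpd_top X \<sigma> k). cfun \<phi> \<sigma> k g \<in> W}"
        using t TG by (simp add: grpd_topspace subsetD)
    qed
    ultimately show "\<exists>T. openin (grpd_top X \<sigma> k) T \<and> g \<in> T \<and> T \<subseteq> {g \<in> topspace (grpd_top X \<sigma> k). cfun \<phi> \<sigma> k g \<in> W}"
      by blast
  qed
qed

end

end

end


theorem proposition3p8:
  fixes X :: "'a::metric_space set" and \<sigma> :: "nat \<Rightarrow> 'a \<Rightarrow> 'a" and k :: nat
    and \<phi> :: "nat \<Rightarrow> 'a \<Rightarrow> 'h::{topological_ab_group_add, t2_space}"
  assumes H_lc: "locally_compact_space (euclidean :: 'h topology)"
    and X_compact: "compact X"
    and \<sigma>_cont: "\<And>i. i < k \<Longrightarrow> continuous_on X (\<sigma> i)"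
    and \<sigma>_surj: "\<And>i. i < k \<Longrightarrow> \<sigma> i ` X = X"
    and \<sigma>_lh: "\<And>i. i < k \<Longrightarrow> local_homeo_on X (\<sigma> i)"
    and \<sigma>_comm: "\<And>i j x. i < k \<Longrightarrow> j < k \<Longrightarrow> x \<in> X \<Longrightarrow> \<sigma> i (\<sigma> j x) = \<sigma> j (\<sigma> i x)"
    and \<phi>_cont: "\<And>i. i < k \<Longrightarrow> continuous_on X (\<phi> i)"
  shows "((\<forall>i<k. \<forall>j<k. \<forall>x\<in>X. \<phi> i x + \<phi> j (\<sigma> i x) = \<phi> j x + \<phi> i (\<sigma> j x))
          \<longleftrightarrow>
          (\<exists>c :: 'a \<times> (nat \<Rightarrow> int) \<times> 'a \<Rightarrow> 'h.
             cont_cocycle X \<sigma> k c \<and> (\<forall>i<k. \<forall>x\<in>X. c (x, unitvec i, \<sigma> i x) = \<phi> i x) \<and>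
             (\<forall>c'. cont_cocycle X \<sigma> k c' \<and> (\<forall>i<k. \<forall>x\<in>X. c' (x, unitvec i, \<sigma> i x) = \<phi> i x)
                \<longrightarrow> (\<forall>g\<in>grpd X \<sigma> k. c' g = c g))))
       \<and> (\<forall>c :: 'a \<times> (nat \<Rightarrow> int) \<times> 'a \<Rightarrow> 'h. cont_cocycle X \<sigma> k c \<longrightarrow>
            (\<exists>\<phi>'. (\<forall>i<k. continuous_on X (\<phi>' i)) \<and>
               (\<forall>i<k. \<forall>j<k. \<forall>x\<in>X. \<phi>' i x + \<phi>' j (\<sigma> i x) = \<phi>' j x + \<phi>' i (\<sigma> j x)) \<and>
               (\<forall>i<k. \<forall>x\<in>X. c (x, unitvec i, \<sigma> i x) = \<phi>' i x)))
       \<and> (\<forall>c :: 'a \<times> (nat \<Rightarrow> int) \<times> 'a \<Rightarrow> 'h. cont_cocycle X \<sigma> k c \<longrightarrow>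
            (coboundary X \<sigma> k c \<longleftrightarrow>
             (\<exists>\<psi>. continuous_on X \<psi> \<and>
                (\<forall>i<k. \<forall>x\<in>X. c (x, unitvec i, \<sigma> i x) = \<psi> x - \<psi> (\<sigma> i x)))))"
proof -
  have maps: "\<And>i x. i < k \<Longrightarrow> x \<in> X \<Longrightarrow> \<sigma> i x \<in> X" using \<sigma>_surj by blast
  have maps0: "\<forall>i<k. \<forall>x\<in>X. \<sigma> i x \<in> X" using maps by blast
  have comm0: "\<forall>i<k. \<forall>j<k. \<forall>x\<in>X. \<sigma> i (\<sigma> j x) = \<sigma> j (\<sigma> i x)" using \<sigma>_comm by blast
  have cont0: "\<forall>i<k. continuous_on X (\<sigma> i)" using \<sigma>_cont by blast
  have lh0: "\<forall>i<k. local_homeo_on X (\<sigma> i)" using \<sigma>_lh by blast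
  have surj0: "\<forall>i<k. \<sigma> i ` X = X" using \<sigma>_surj by blast
  have \<phi>cont0: "\<forall>i<k. continuous_on X (\<phi> i)" using \<phi>_cont by blast
  note cdef = cocyc_def[OF maps0 comm0]
  have ccD: "cont_cocycle X \<sigma> k c \<longleftrightarrow> continuous_map (grpd_top X \<sigma> k) euclidean c \<and> cocyc X \<sigma> k c" for c :: "'a \<times> (nat \<Rightarrow> int) \<times> 'a \<Rightarrow> 'h"
    by (simp add: cont_cocycle_def cdef)
  have P1: "(\<forall>i<k. \<forall>j<k. \<forall>x\<in>X. \<phi> i x + \<phi> j (\<sigma> i x) = \<phi> j x + \<phi> i (\<sigma> j x))
          \<longleftrightarrow>
          (\<exists>c :: 'a \<times> (nat \<Rightarrow> int) \<times> 'a \<Rightarrow> 'h.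
             cont_cocycle X \<sigma> k c \<and> (\<forall>i<k. \<forall>x\<in>X. c (x, unitvec i, \<sigma> i x) = \<phi> i x) \<and>
             (\<forall>c'. cont_cocycle X \<sigma> k c' \<and> (\<forall>i<k. \<forall>x\<in>X. c' (x, unitvec i, \<sigma> i x) = \<phi> i x)
                \<longrightarrow> (\<forall>g\<in>grpd X \<sigma> k. c' g = c g)))"
  proof
    assume cond: "\<forall>i<k. \<forall>j<k. \<forall>x\<in>X. \<phi> i x + \<phi> j (\<sigma> i x) = \<phi> j x + \<phi> i (\<sigma> j x)"
    then have cond': "\<And>i j x. i < k \<Longrightarrow> j < k \<Longrightarrow> x \<in> X \<Longrightarrow> \<phi> i x + \<phi> j (\<sigma> i x) = \<phi> j x + \<phi> i (\<sigma> j x)"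
      by blast
    let ?c = "cfun \<phi> \<sigma> k"
    have cc: "cocyc X \<sigma> k ?c" unfolding cdef
      using cfun_cocycle[OF maps0 comm0 cond] by blast
    have ct: "continuous_map (grpd_top X \<sigma> k) euclidean ?c"
      by (rule cfun_cont[OF maps0 comm0 cont0 lh0 surj0 cond \<phi>cont0])
    have gen: "\<forall>i<k. \<forall>x\<in>X. ?c (x, unitvec i, \<sigma> i x) = \<phi> i x"
      using cfun_gen[OF maps0 comm0 cond] by blast
    have uq: "\<forall>c'. cont_cocycle X \<sigma> k c' \<and> (\<forall>i<k. \<forall>x\<in>X. c' (x, unitvec i, \<sigma> i x) = \<phi> i x)
                \<longrightarrow> (\<forall>g\<in>grpd X \<sigma> k. c' g = ?c g)"
    proof (intro allI impI ballI)
      fix c' g assume a: "cont_cocycle X \<sigma> k c' \<and> (\<forall>i<k. \<forall>x\<in>X. c' (x, unitvec i, \<sigma> i x) = \<phi> i x)"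
        and g: "g \<in> grpd X \<sigma> k"
      show "c' g = ?c g"
        by (rule cocyc_unique[OF maps0 comm0 _ cc _ g]) (use a gen ccD in auto)
    qed
    show "\<exists>c. cont_cocycle X \<sigma> k c \<and> (\<forall>i<k. \<forall>x\<in>X. c (x, unitvec i, \<sigma> i x) = \<phi> i x) \<and>
             (\<forall>c'. cont_cocycle X \<sigma> k c' \<and> (\<forall>i<k. \<forall>x\<in>X. c' (x, unitvec i, \<sigma> i x) = \<phi> i x)
                \<longrightarrow> (\<forall>g\<in>grpd X \<sigma> k. c' g = c g))"
      using cc ct gen uq ccD by blast
  next
    assume "\<exists>c :: 'a \<times> (nat \<Rightarrow> int) \<times> 'a \<Rightarrow> 'h.
             cont_cocycle X \<sigma> k c \<and> (\<forall>i<k. \<forall>x\<in>X. c (x, unitvec i, \<sigma> i x) = \<phi> i x) \<and>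
             (\<forall>c'. cont_cocycle X \<sigma> k c' \<and> (\<forall>i<k. \<forall>x\<in>X. c' (x, unitvec i, \<sigma> i x) = \<phi> i x)
                \<longrightarrow> (\<forall>g\<in>grpd X \<sigma> k. c' g = c g))"
    then obtain c :: "'a \<times> (nat \<Rightarrow> int) \<times> 'a \<Rightarrow> 'h" where c: "cocyc X \<sigma> k c"
      and gen: "\<forall>i<k. \<forall>x\<in>X. c (x, unitvec i, \<sigma> i x) = \<phi> i x" using ccD by blast
    show "\<forall>i<k. \<forall>j<k. \<forall>x\<in>X. \<phi> i x + \<phi> j (\<sigma> i x) = \<phi> j x + \<phi> i (\<sigma> j x)"
    proof (intro allI impI ballI)
      fix i j x assume ij: "i < k" "j < k" and x: "x \<in> X"
      show "\<phi> i x + \<phi> j (\<sigma> i x) = \<phi> j x + \<phi> i (\<sigma> j x)"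
        using cocyc_cond[OF maps0 comm0 c ij x] gen ij x maps by simp
    qed
  qed
  have P2: "\<forall>c :: 'a \<times> (nat \<Rightarrow> int) \<times> 'a \<Rightarrow> 'h. cont_cocycle X \<sigma> k c \<longrightarrow>
            (\<exists>\<phi>'. (\<forall>i<k. continuous_on X (\<phi>' i)) \<and>
               (\<forall>i<k. \<forall>j<k. \<forall>x\<in>X. \<phi>' i x + \<phi>' j (\<sigma> i x) = \<phi>' j x + \<phi>' i (\<sigma> j x)) \<and>
               (\<forall>i<k. \<forall>x\<in>X. c (x, unitvec i, \<sigma> i x) = \<phi>' i x))"
  proof (intro allI impI)
    fix c :: "'a \<times> (nat \<Rightarrow> int) \<times> 'a \<Rightarrow> 'h" assume "cont_cocycle X \<sigma> k c"
    then have ct: "continuous_map (grpd_top X \<sigma> k) euclidean c" and c: "cocyc X \<sigma> k c" using ccD by auto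
    let ?\<phi> = "\<lambda>i x. c (x, unitvec i, \<sigma> i x)"
    have "\<forall>i<k. continuous_on X (?\<phi> i)"
      using gen_cont[OF maps0 comm0 cont0 lh0 surj0 ct] by blast
    moreover have "\<forall>i<k. \<forall>j<k. \<forall>x\<in>X. ?\<phi> i x + ?\<phi> j (\<sigma> i x) = ?\<phi> j x + ?\<phi> i (\<sigma> j x)"
      using cocyc_cond[OF maps0 comm0 c] by blast
    ultimately show "\<exists>\<phi>'. (\<forall>i<k. continuous_on X (\<phi>' i)) \<and>
               (\<forall>i<k. \<forall>j<k. \<forall>x\<in>X. \<phi>' i x + \<phi>' j (\<sigma> i x) = \<phi>' j x + \<phi>' i (\<sigma> j x)) \<and>
               (\<forall>i<k. \<forall>x\<in>X. c (x, unitvec i, \<sigma> i x) = \<phi>' i x)"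
      by (intro exI[of _ ?\<phi>] conjI) auto
  qed
  have P3: "\<forall>c :: 'a \<times> (nat \<Rightarrow> int) \<times> 'a \<Rightarrow> 'h. cont_cocycle X \<sigma> k c \<longrightarrow>
            (coboundary X \<sigma> k c \<longleftrightarrow>
             (\<exists>\<psi>. continuous_on X \<psi> \<and>
                (\<forall>i<k. \<forall>x\<in>X. c (x, unitvec i, \<sigma> i x) = \<psi> x - \<psi> (\<sigma> i x))))"
  proof (intro allI impI iffI)
    fix c :: "'a \<times> (nat \<Rightarrow> int) \<times> 'a \<Rightarrow> 'h"
    assume "coboundary X \<sigma> k c"
    then obtain f where f: "continuous_on X f" "\<forall>x m y. (x, m, y) \<in> grpd X \<sigma> k \<longrightarrow> c (x, m, y) = f x - f y"
      unfolding coboundary_def by blast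
    have "\<forall>i<k. \<forall>x\<in>X. c (x, unitvec i, \<sigma> i x) = f x - f (\<sigma> i x)"
      using f(2) G_gen[OF maps0 comm0] by blast
    then show "\<exists>\<psi>. continuous_on X \<psi> \<and> (\<forall>i<k. \<forall>x\<in>X. c (x, unitvec i, \<sigma> i x) = \<psi> x - \<psi> (\<sigma> i x))"
      using f(1) by blast
  next
    fix c :: "'a \<times> (nat \<Rightarrow> int) \<times> 'a \<Rightarrow> 'h"
    assume "cont_cocycle X \<sigma> k c"
    then have c: "cocyc X \<sigma> k c" using ccD by auto
    assume "\<exists>\<psi>. continuous_on X \<psi> \<and> (\<forall>i<k. \<forall>x\<in>X. c (x, unitvec i, \<sigma> i x) = \<psi> x - \<psi> (\<sigma> i x))"
    then obtain \<psi> where \<psi>: "continuous_on X \<psi>" "\<forall>i<k. \<forall>x\<in>X. c (x, unitvec i, \<sigma> i x) = \<psi> x - \<psi> (\<sigma> i x)"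
      by blast
    let ?d = "\<lambda>g :: 'a \<times> (nat \<Rightarrow> int) \<times> 'a. \<psi> (fst g) - \<psi> (snd (snd g))"
    have d: "cocyc X \<sigma> k ?d" unfolding cdef by simp
    have "\<forall>x m y. (x, m, y) \<in> grpd X \<sigma> k \<longrightarrow> c (x, m, y) = \<psi> x - \<psi> y"
    proof (intro allI impI)
      fix x m y assume g: "(x, m, y) \<in> grpd X \<sigma> k"
      have "c (x, m, y) = ?d (x, m, y)"
        by (rule cocyc_unique[OF maps0 comm0 c d _ g]) (use \<psi> in simp)
      then show "c (x, m, y) = \<psi> x - \<psi> y" by simp
    qed
    then show "coboundary X \<sigma> k c" unfolding coboundary_def using \<psi>(1) by blast
  qed
  show ?thesis using P1 P2 P3 by blast
qed

end
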